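(* Let $G$ be a left (resp. right) topological group and let $H$ be a closed subgroup of $G$. Then $\mathrm{r}_{\mathcal C_1}H=\mathrm{r}_{(G,\mathcal C_1)}(H)$; that is, the map $\mathrm{r}_{\mathcal C_1}H\to\mathrm{r}_{\mathcal C_1}G$ induced by the inclusion $H\hookrightarrow G$ is a homeomorphism of $\mathrm{r}_{\mathcal C_1}H$ onto the subspace $\mathrm{r}_{(G,\mathcal C_1)}(H)$ of $\mathrm{r}_{\mathcal C_1}G$.
   Context: A left (resp. right) topological group is a group with a topology in which all left translations $x\mapsto ax$ (resp. right translations $x\mapsto xa$) are continuous. $\mathcal C_1$ is the epireflective subcategory of $\mathbf{Top}$ of $T_1$ spaces; $\mathrm{r}_{\mathcal C_1}X$ is the $T_1$-reflection of a space $X$, with universal continuous surjection $\mathrm{r}_{(X,\mathcal C_1)}\colon X\to\mathrm{r}_{\mathcal C_1}X$ through which every continuous map from $X$ into a $T_1$ space factors uniquely. *)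

theory Defs
  imports "HOL-Analysis.Analysis" "HOL-Algebra.Group"
begin

definition left_topological_group :: "('a, 'm) monoid_scheme \<Rightarrow> 'a topology \<Rightarrow> bool" where
  "left_topological_group G T \<longleftrightarrow> group G \<and> topspace T = carrier G \<and>
     (\<forall>a \<in> carrier G. continuous_map T T (\<lambda>x. a \<otimes>\<^bsub>G\<^esub> x))"

definition right_topological_group :: "('a, 'm) monoid_scheme \<Rightarrow> 'a topology \<Rightarrow> bool" where
  "right_topological_group G T \<longleftrightarrow> group G \<and> topspace T = carrier G \<and>
     (\<forall>a \<in> carrier G. continuous_map T T (\<lambda>x. x \<otimes>\<^bsub>G\<^esub> a))"

text \<open>The test spaces Z range over topologies on the type of points of X; since the image of X
under a map has cardinality at most that of X, this is equivalent to quantifying over all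
T1 spaces.\<close>

definition T1_reflection :: "'a topology \<Rightarrow> 'b topology \<Rightarrow> ('a \<Rightarrow> 'b) \<Rightarrow> bool" where
  "T1_reflection X Y r \<longleftrightarrow> t1_space Y \<and> continuous_map X Y r \<and> r ` topspace X = topspace Y \<and>
     (\<forall>(Z :: 'a topology) f. t1_space Z \<and> continuous_map X Z f \<longrightarrow>
        (\<exists>g. continuous_map Y Z g \<and> (\<forall>x \<in> topspace X. g (r x) = f x)) \<and>
        (\<forall>g1 g2. continuous_map Y Z g1 \<and> (\<forall>x \<in> topspace X. g1 (r x) = f x) \<and>
                 continuous_map Y Z g2 \<and> (\<forall>x \<in> topspace X. g2 (r x) = f x) \<longrightarrow>
                 (\<forall>y \<in> topspace Y. g1 y = g2 y)))"

end

theory Submission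
  imports Defs
begin

definition qtop :: "'a topology \<Rightarrow> ('a \<Rightarrow> 'b) \<Rightarrow> 'b topology" where
  "qtop X f = topology (\<lambda>U. U \<subseteq> f ` topspace X \<and> openin X {x \<in> topspace X. f x \<in> U})"

lemma openin_qtop:
  "openin (qtop X f) U \<longleftrightarrow> U \<subseteq> f ` topspace X \<and> openin X {x \<in> topspace X. f x \<in> U}"
proof -
  have "istopology (\<lambda>U. U \<subseteq> f ` topspace X \<and> openin X {x \<in> topspace X. f x \<in> U})"
    unfolding istopology_def
  proof (rule conjI; intro allI impI)
    fix S T assume a: "S \<subseteq> f ` topspace X \<and> openin X {x \<in> topspace X. f x \<in> S}"
      "T \<subseteq> f ` topspace X \<and> openin X {x \<in> topspace X. f x \<in> T}"
    have "{x \<in> topspace X. f x \<in> S \<inter> T} = {x \<in> topspace X. f x \<in> S} \<inter> {x \<in> topspace X. f x \<in> T}"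
      by auto
    with a show "S \<inter> T \<subseteq> f ` topspace X \<and> openin X {x \<in> topspace X. f x \<in> S \<inter> T}"
      by auto
  next
    fix K assume a: "\<forall>K\<in>K. K \<subseteq> f ` topspace X \<and> openin X {x \<in> topspace X. f x \<in> K}"
    have "{x \<in> topspace X. f x \<in> \<Union>K} = \<Union>((\<lambda>U. {x \<in> topspace X. f x \<in> U}) ` K)"
      by auto
    moreover have "openin X (\<Union>((\<lambda>U. {x \<in> topspace X. f x \<in> U}) ` K))"
      using a by auto
    ultimately show "\<Union>K \<subseteq> f ` topspace X \<and> openin X {x \<in> topspace X. f x \<in> \<Union>K}"
      using a by auto
  qed
  then show ?thesis by (simp add: qtop_def)
qed

lemma topspace_qtop: "topspace (qtop X f) = f ` topspace X"
proof -
  have "openin (qtop X f) (f ` topspace X)"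
  proof -
    have "{x \<in> topspace X. f x \<in> f ` topspace X} = topspace X" by auto
    then show ?thesis unfolding openin_qtop by simp
  qed
  then have "f ` topspace X \<subseteq> topspace (qtop X f)" by (rule openin_subset)
  moreover have "topspace (qtop X f) \<subseteq> f ` topspace X"
    using openin_qtop[of X f "topspace (qtop X f)"] by simp
  ultimately show ?thesis by blast
qed

lemma continuous_map_qtop: "continuous_map X (qtop X f) f"
  unfolding continuous_map_def openin_qtop topspace_qtop by auto

lemma closedin_qtop:
  "closedin (qtop X f) C \<longleftrightarrow> C \<subseteq> f ` topspace X \<and> closedin X {x \<in> topspace X. f x \<in> C}"
proof -
  have e: "{x \<in> topspace X. f x \<in> f ` topspace X - C} = topspace X - {x \<in> topspace X. f x \<in> C}"
    by auto
  show ?thesis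
    unfolding closedin_def topspace_qtop openin_qtop e by auto
qed


definition core :: "('a, 'm) monoid_scheme \<Rightarrow> 'a topology \<Rightarrow> 'a set" where
  "core G T = \<Inter>{K. subgroup K G \<and> closedin T K}"

context group
begin

lemma core_props:
  assumes top: "topspace T = carrier G"
  shows "subgroup (core G T) G" "closedin T (core G T)"
proof -
  have ne: "carrier G \<in> {K. subgroup K G \<and> closedin T K}"
    using subgroup_self top by (metis closedin_topspace mem_Collect_eq)
  show "subgroup (core G T) G" unfolding core_def
    by (rule subgroups_Inter) (use ne in auto)
  show "closedin T (core G T)" unfolding core_def
    by (rule closedin_Inter) (use ne in auto)
qed

lemma core_A1:
  assumes top: "topspace T = carrier G"
    and L: "\<forall>a\<in>carrier G. continuous_map T T (\<lambda>x. a \<otimes> x)"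
    and f: "continuous_map T Z f" "t1_space Z"
    and xy: "x \<in> carrier G" "y \<in> carrier G" "inv x \<otimes> y \<in> core G T"
  shows "f x = f y"
proof -
  define A where "A = {g \<in> carrier G. \<forall>x\<in>carrier G. f (x \<otimes> g) = f x}"
  have sA: "subgroup A G"
  proof (rule subgroupI)
    show "A \<subseteq> carrier G" unfolding A_def by auto
    have "\<one> \<in> A" unfolding A_def by simp
    then show "A \<noteq> {}" by blast
  next
    fix a assume a: "a \<in> A"
    then have ac: "a \<in> carrier G" unfolding A_def by auto
    show "inv a \<in> A" unfolding A_def
    proof (intro CollectI conjI ballI)
      show "inv a \<in> carrier G" using ac by simp
      fix x assume x: "x \<in> carrier G"
      have "f ((x \<otimes> inv a) \<otimes> a) = f (x \<otimes> inv a)"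
        using a x ac unfolding A_def by auto
      moreover have "(x \<otimes> inv a) \<otimes> a = x" using x ac by (simp add: m_assoc)
      ultimately show "f (x \<otimes> inv a) = f x" by simp
    qed
  next
    fix a b assume a: "a \<in> A" and b: "b \<in> A"
    then have ac: "a \<in> carrier G" and bc: "b \<in> carrier G" unfolding A_def by auto
    show "a \<otimes> b \<in> A" unfolding A_def
    proof (intro CollectI conjI ballI)
      show "a \<otimes> b \<in> carrier G" using ac bc by simp
      fix x assume x: "x \<in> carrier G"
      have "f ((x \<otimes> a) \<otimes> b) = f (x \<otimes> a)" using b x ac unfolding A_def by auto
      also have "\<dots> = f x" using a x unfolding A_def by auto
      finally show "f (x \<otimes> (a \<otimes> b)) = f x" using x ac bc by (simp add: m_assoc)
    qed
  qed
  have cA: "closedin T A"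
  proof -
    have eq: "A = \<Inter>(insert (topspace T) ((\<lambda>x. {g \<in> topspace T. f (x \<otimes> g) \<in> {f x}}) ` carrier G))"
      unfolding A_def top by auto
    have "closedin T {g \<in> topspace T. f (x \<otimes> g) \<in> {f x}}" if x: "x \<in> carrier G" for x
    proof -
      have "continuous_map T Z (f \<circ> (\<lambda>g. x \<otimes> g))"
        using L x f(1) continuous_map_compose by blast
      moreover have "closedin Z {f x}"
        using f x top t1_space_closedin_singleton continuous_map_def
        by (metis (no_types, lifting) image_subset_iff continuous_map_image_subset_topspace)
      ultimately show ?thesis using closedin_continuous_map_preimage[of T Z "f \<circ> (\<lambda>g. x \<otimes> g)" "{f x}"]
        by simp
    qed
    then show ?thesis unfolding eq by (intro closedin_Inter) auto
  qed
  have "core G T \<subseteq> A" unfolding core_def using sA cA by auto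
  then have "inv x \<otimes> y \<in> A" using xy by auto
  then have "f (x \<otimes> (inv x \<otimes> y)) = f x" using xy unfolding A_def by auto
  moreover have "x \<otimes> (inv x \<otimes> y) = y" using xy by (simp add: m_assoc[symmetric])
  ultimately show ?thesis by simp
qed


lemma core_rep:
  assumes top: "topspace T = carrier G"
    and L: "\<forall>a\<in>carrier G. continuous_map T T (\<lambda>x. a \<otimes> x)"
  obtains rep where "\<And>x. x \<in> carrier G \<Longrightarrow> rep x \<in> carrier G \<and> inv x \<otimes> rep x \<in> core G T"
    "\<And>x y. x \<in> carrier G \<Longrightarrow> y \<in> carrier G \<Longrightarrow> rep x = rep y \<longleftrightarrow> inv x \<otimes> y \<in> core G T"
    "continuous_map T (qtop T rep) rep" "t1_space (qtop T rep)"
proof -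
  define S where "S = core G T"
  have sS: "subgroup S G" and cS: "closedin T S" using core_props[OF top] by (auto simp: S_def)
  have trans: "inv x \<otimes> z \<in> S" if "x \<in> carrier G" "y \<in> carrier G" "z \<in> carrier G"
    "inv x \<otimes> y \<in> S" "inv y \<otimes> z \<in> S" for x y z
  proof -
    have "(inv x \<otimes> y) \<otimes> (inv y \<otimes> z) \<in> S" using subgroup.m_closed[OF sS that(4) that(5)] .
    moreover have "(inv x \<otimes> y) \<otimes> (inv y \<otimes> z) = inv x \<otimes> z"
    proof -
      have "(inv x \<otimes> y) \<otimes> (inv y \<otimes> z) = inv x \<otimes> ((y \<otimes> inv y) \<otimes> z)"
        using that by (simp only: m_assoc inv_closed m_closed)
      also have "\<dots> = inv x \<otimes> z" using that by simp
      finally show ?thesis .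
    qed
    ultimately show ?thesis by simp
  qed
  have sym: "inv y \<otimes> x \<in> S" if "x \<in> carrier G" "y \<in> carrier G" "inv x \<otimes> y \<in> S" for x y
  proof -
    have "inv (inv x \<otimes> y) \<in> S" using subgroup.m_inv_closed[OF sS that(3)] by simp
    moreover have "inv (inv x \<otimes> y) = inv y \<otimes> x" using that by (simp add: inv_mult_group)
    ultimately show ?thesis by simp
  qed
  define rep where "rep x = (SOME z. z \<in> carrier G \<and> inv x \<otimes> z \<in> S)" for x
  have r1: "rep x \<in> carrier G \<and> inv x \<otimes> rep x \<in> S" if "x \<in> carrier G" for x
    unfolding rep_def
  proof (rule someI)
    show "x \<in> carrier G \<and> inv x \<otimes> x \<in> S" using that subgroup.one_closed[OF sS] by simp
  qed
  have r2: "rep x = rep y \<longleftrightarrow> inv x \<otimes> y \<in> S" if "x \<in> carrier G" "y \<in> carrier G" for x y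
  proof
    assume e: "rep x = rep y"
    have a1: "inv x \<otimes> rep x \<in> S" "inv y \<otimes> rep y \<in> S" "rep y \<in> carrier G" using r1 that by auto
    have "inv (rep y) \<otimes> y \<in> S" by (rule sym[OF that(2) a1(3) a1(2)])
    then show "inv x \<otimes> y \<in> S" using trans[OF that(1) a1(3) that(2)] a1(1) e by simp
  next
    assume e: "inv x \<otimes> y \<in> S"
    have "(\<lambda>z. z \<in> carrier G \<and> inv x \<otimes> z \<in> S) = (\<lambda>z. z \<in> carrier G \<and> inv y \<otimes> z \<in> S)"
    proof (rule ext, rule iffI)
      fix z assume z: "z \<in> carrier G \<and> inv x \<otimes> z \<in> S"
      have "inv y \<otimes> x \<in> S" by (rule sym[OF that e])
      then show "z \<in> carrier G \<and> inv y \<otimes> z \<in> S" using trans[OF that(2) that(1), of z] z by blast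
    next
      fix z assume z: "z \<in> carrier G \<and> inv y \<otimes> z \<in> S"
      then show "z \<in> carrier G \<and> inv x \<otimes> z \<in> S" using trans[OF that(1) that(2), of z] e by blast
    qed
    then show "rep x = rep y" unfolding rep_def by simp
  qed
  have c: "continuous_map T (qtop T rep) rep" by (rule continuous_map_qtop)
  have t1: "t1_space (qtop T rep)"
    unfolding t1_space_closedin_singleton
  proof
    fix q assume "q \<in> topspace (qtop T rep)"
    then obtain z where z: "z \<in> carrier G" and q: "q = rep z" unfolding topspace_qtop top by auto
    have eq: "{x \<in> topspace T. rep x \<in> {q}} = {x \<in> topspace T. inv z \<otimes> x \<in> S}"
    proof -
      have "rep x = q \<longleftrightarrow> inv z \<otimes> x \<in> S" if "x \<in> carrier G" for x
        using r2[OF z that] q by auto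
      then show ?thesis using top by auto
    qed
    have "closedin T {x \<in> topspace T. inv z \<otimes> x \<in> S}"
      by (rule closedin_continuous_map_preimage[OF _ cS]) (use L z in simp)
    then show "closedin (qtop T rep) {q}"
      unfolding closedin_qtop eq using z q top by auto
  qed
  have r1': "\<And>x. x \<in> carrier G \<Longrightarrow> rep x \<in> carrier G \<and> inv x \<otimes> rep x \<in> core G T"
    using r1 unfolding S_def .
  have r2': "\<And>x y. x \<in> carrier G \<Longrightarrow> y \<in> carrier G \<Longrightarrow> rep x = rep y \<longleftrightarrow> inv x \<otimes> y \<in> core G T"
    using r2 unfolding S_def .
  show ?thesis by (rule that[OF r1' r2' c t1])
qed

lemma core_A2:
  assumes top: "topspace T = carrier G"
    and L: "\<forall>a\<in>carrier G. continuous_map T T (\<lambda>x. a \<otimes> x)"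
    and R: "T1_reflection T R r"
    and xy: "x \<in> carrier G" "y \<in> carrier G" "r x = r y"
  shows "inv x \<otimes> y \<in> core G T"
proof -
  obtain rep where r1: "\<And>x. x \<in> carrier G \<Longrightarrow> rep x \<in> carrier G \<and> inv x \<otimes> rep x \<in> core G T"
    and r2: "\<And>x y. x \<in> carrier G \<Longrightarrow> y \<in> carrier G \<Longrightarrow> rep x = rep y \<longleftrightarrow> inv x \<otimes> y \<in> core G T"
    and c: "continuous_map T (qtop T rep) rep" and t1: "t1_space (qtop T rep)"
    using core_rep[OF top L] by blast
  obtain g where g: "\<forall>x \<in> topspace T. g (r x) = rep x"
    using R c t1 unfolding T1_reflection_def by blast
  have "rep x = rep y" using g xy top by metis
  then show ?thesis using r2 xy by blast
qed

lemma core_A3: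
  assumes top: "topspace T = carrier G"
    and L: "\<forall>a\<in>carrier G. continuous_map T T (\<lambda>x. a \<otimes> x)"
    and R: "T1_reflection T R r"
    and W: "W \<subseteq> topspace R" "closedin T {x \<in> topspace T. r x \<in> W}"
  shows "closedin R W"
proof -
  obtain rep where r1: "\<And>x. x \<in> carrier G \<Longrightarrow> rep x \<in> carrier G \<and> inv x \<otimes> rep x \<in> core G T"
    and r2: "\<And>x y. x \<in> carrier G \<Longrightarrow> y \<in> carrier G \<Longrightarrow> rep x = rep y \<longleftrightarrow> inv x \<otimes> y \<in> core G T"
    and c: "continuous_map T (qtop T rep) rep" and t1: "t1_space (qtop T rep)"
    using core_rep[OF top L] by blast
  have Rt: "t1_space R" "continuous_map T R r" "r ` topspace T = topspace R"
    using R unfolding T1_reflection_def by auto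
  obtain g where gc: "continuous_map R (qtop T rep) g" and g: "\<forall>x \<in> topspace T. g (r x) = rep x"
    using R c t1 unfolding T1_reflection_def by blast
  have rr: "r (rep x) = r x" if "x \<in> carrier G" for x
  proof -
    have "r x = r (rep x)"
      by (rule core_A1[OF top L Rt(2) Rt(1)]) (use r1 that in auto)
    then show ?thesis by simp
  qed
  define W' where "W' = {q \<in> topspace (qtop T rep). r q \<in> W}"
  have "{x \<in> topspace T. rep x \<in> W'} = {x \<in> topspace T. r x \<in> W}"
    unfolding W'_def topspace_qtop using rr top by auto (metis rr)
  then have cW': "closedin (qtop T rep) W'"
    unfolding closedin_qtop using W(2) unfolding W'_def topspace_qtop by auto
  have "W = {w \<in> topspace R. g w \<in> W'}"
  proof (intro equalityI subsetI)
    fix w assume w: "w \<in> W"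
    then obtain x where x: "x \<in> topspace T" "w = r x" using W(1) Rt(3) by auto
    then show "w \<in> {w \<in> topspace R. g w \<in> W'}"
      using w g rr top W(1) unfolding W'_def topspace_qtop by auto
  next
    fix w assume w: "w \<in> {w \<in> topspace R. g w \<in> W'}"
    then obtain x where x: "x \<in> topspace T" "w = r x" using Rt(3) by auto
    then show "w \<in> W" using w g rr top unfolding W'_def by auto
  qed
  then show ?thesis using closedin_continuous_map_preimage[OF gc cW'] by simp
qed
end

lemma (in group) main_left:
  fixes T :: "'a topology" and H :: "'a set"
    and RG :: "'p topology" and rG :: "'a \<Rightarrow> 'p"
    and RH :: "'q topology" and rH :: "'a \<Rightarrow> 'q"
    and \<phi> :: "'q \<Rightarrow> 'p"
  assumes LT: "left_topological_group G T"
    and sH: "subgroup H G"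
    and cH: "closedin T H"
    and RG: "T1_reflection T RG rG"
    and RH: "T1_reflection (subtopology T H) RH rH"
    and phic: "continuous_map RH RG \<phi>"
    and phie: "\<forall>h \<in> H. \<phi> (rH h) = rG h"
  shows "homeomorphic_map RH (subtopology RG (rG ` H))  \<phi>"
proof -
  have grp: "group G" and top: "topspace T = carrier G"
    and L: "\<forall>a\<in>carrier G. continuous_map T T (\<lambda>x. a \<otimes>\<^bsub>G\<^esub> x)"
    using LT unfolding left_topological_group_def by auto
  define GH where "GH = G\<lparr>carrier := H\<rparr>"
  have Hc: "H \<subseteq> carrier G" using sH subgroup.subset by blast
  have grpH: "group GH" unfolding GH_def by (rule subgroup_imp_group[OF sH])
  have topH: "topspace (subtopology T H) = carrier GH"
    unfolding GH_def using top Hc by auto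
  have LH: "\<forall>a\<in>carrier GH. continuous_map (subtopology T H) (subtopology T H) (\<lambda>x. a \<otimes>\<^bsub>GH\<^esub> x)"
  proof
    fix a assume a: "a \<in> carrier GH"
    then have aG: "a \<in> carrier G" "a \<in> H" using Hc unfolding GH_def by auto
    have "continuous_map (subtopology T H) T (\<lambda>x. a \<otimes> x)"
      using L aG continuous_map_from_subtopology by blast
    moreover have "(\<lambda>x. a \<otimes> x) ` topspace (subtopology T H) \<subseteq> H"
      using aG sH subgroup.m_closed top Hc by fastforce
    ultimately have "continuous_map (subtopology T H) (subtopology T H) (\<lambda>x. a \<otimes> x)"
      using continuous_map_into_subtopology by blast
    then show "continuous_map (subtopology T H) (subtopology T H) (\<lambda>x. a \<otimes>\<^bsub>GH\<^esub> x)"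
      unfolding GH_def by simp
  qed
  define S where "S = core G T"
  define SH where "SH = core GH (subtopology T H)"
  have SsubH: "S \<subseteq> H" unfolding S_def core_def using sH cH by auto
  have SsubSH: "S \<subseteq> SH"
    unfolding SH_def core_def
  proof (rule Inter_greatest)
    fix K assume K: "K \<in> {K. subgroup K GH \<and> closedin (subtopology T H) K}"
    then have KH: "K \<subseteq> H" using subgroup.subset unfolding GH_def by fastforce
    have "group (GH\<lparr>carrier := K\<rparr>)" using K group.subgroup_imp_group[OF grpH] by blast
    then have "group (G\<lparr>carrier := K\<rparr>)" unfolding GH_def by simp
    then have "subgroup K G" using group_incl_imp_subgroup KH Hc by blast
    moreover have "closedin T K" using K closedin_closed_subtopology[OF cH] by blast
    ultimately show "S \<subseteq> K" unfolding S_def core_def by auto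
  qed
  have RGp: "t1_space RG" "continuous_map T RG rG" "rG ` topspace T = topspace RG"
    using RG unfolding T1_reflection_def by auto
  have RHp: "t1_space RH" "continuous_map (subtopology T H) RH rH" "rH ` topspace (subtopology T H) = topspace RH"
    using RH unfolding T1_reflection_def by auto
  have tsH: "topspace (subtopology T H) = H" using top Hc by auto
  have tsRH: "topspace RH = rH ` H" using RHp(3) tsH by simp
  have tsRG: "topspace (subtopology RG (rG ` H)) = rG ` H"
    using RGp(3) top Hc by auto
  have key: "y \<in> H \<and> rH x = rH y" if x: "x \<in> H" and y: "y \<in> carrier G" and e: "rG x = rG y" for x y
  proof -
    have xG: "x \<in> carrier G" using x Hc by auto
    have s: "inv x \<otimes> y \<in> S" unfolding S_def by (rule core_A2[OF top L RG xG y e])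
    have yH: "y \<in> H"
    proof -
      have "x \<otimes> (inv x \<otimes> y) \<in> H" using subgroup.m_closed[OF sH x] s SsubH by auto
      moreover have "x \<otimes> (inv x \<otimes> y) = y" using xG y by (simp add: m_assoc[symmetric])
      ultimately show ?thesis by simp
    qed
    have "inv\<^bsub>GH\<^esub> x \<otimes>\<^bsub>GH\<^esub> y = inv x \<otimes> y"
      unfolding GH_def using m_inv_consistent[OF sH x] by simp
    then have "inv\<^bsub>GH\<^esub> x \<otimes>\<^bsub>GH\<^esub> y \<in> SH" using s SsubSH by auto
    then have "rH x = rH y"
      using group.core_A1[OF grpH topH LH RHp(2) RHp(1)] x yH unfolding GH_def SH_def by auto
    then show ?thesis using yH by simp
  qed
  show ?thesis
  proof (rule bijective_closed_imp_homeomorphic_map)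
    show img: "\<phi> ` topspace RH = topspace (subtopology RG (rG ` H))"
      unfolding tsRH tsRG using phie by (auto simp: image_iff)
    show "continuous_map RH (subtopology RG (rG ` H)) \<phi>"
      using continuous_map_into_subtopology[OF phic] img tsRG by auto
    show "inj_on \<phi> (topspace RH)"
    proof (rule inj_onI)
      fix p q assume p: "p \<in> topspace RH" and q: "q \<in> topspace RH" and e: "\<phi> p = \<phi> q"
      obtain x where x: "x \<in> H" "p = rH x" using p tsRH by auto
      obtain y where y: "y \<in> H" "q = rH y" using q tsRH by auto
      have "rG x = rG y" using e x y phie by auto
      then show "p = q" using key[OF x(1) _ ] y x Hc by auto
    qed
    show "closed_map RH (subtopology RG (rG ` H)) \<phi>"
      unfolding closed_map_def
    proof (intro allI impI)
      fix C assume C: "closedin RH C"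
      define D where "D = {x \<in> topspace (subtopology T H). rH x \<in> C}"
      have "closedin (subtopology T H) D"
        unfolding D_def by (rule closedin_continuous_map_preimage[OF RHp(2) C])
      then have cD: "closedin T D" using closedin_closed_subtopology[OF cH] by blast
      have DH: "D \<subseteq> H" unfolding D_def tsH by auto
      have CsubRH: "C \<subseteq> rH ` H" using closedin_subset[OF C] tsRH by auto
      have phiC: "\<phi> ` C = rG ` D"
      proof (intro equalityI subsetI)
        fix w assume "w \<in> \<phi> ` C"
        then obtain c where c: "c \<in> C" "w = \<phi> c" by auto
        then obtain x where x: "x \<in> H" "c = rH x" using CsubRH by auto
        then show "w \<in> rG ` D" using c phie unfolding D_def tsH by auto
      next
        fix w assume "w \<in> rG ` D"
        then obtain x where x: "x \<in> D" "w = rG x" by auto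
        then show "w \<in> \<phi> ` C" using phie DH unfolding D_def by force
      qed
      have pre: "{x \<in> topspace T. rG x \<in> rG ` D} = D"
      proof (intro equalityI subsetI)
        fix y assume "y \<in> {x \<in> topspace T. rG x \<in> rG ` D}"
        then obtain x where y: "y \<in> carrier G" and x: "x \<in> D" and e: "rG x = rG y"
          using top by force
        have "y \<in> H \<and> rH x = rH y" using key[OF _ y e] x DH by auto
        then show "y \<in> D" using x unfolding D_def tsH by auto
      next
        fix y assume "y \<in> D"
        then show "y \<in> {x \<in> topspace T. rG x \<in> rG ` D}" using DH top Hc by auto
      qed
      have "rG ` D \<subseteq> topspace RG" using RGp(3) DH Hc top by auto
      then have "closedin RG (rG ` D)"
        by (rule core_A3[OF top L RG]) (simp add: pre cD)
      then show "closedin (subtopology RG (rG ` H)) (\<phi> ` C)"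
        unfolding phiC by (rule closedin_subset_topspace) (use DH in auto)
    qed
  qed
qed

definition opp :: "('a, 'm) monoid_scheme \<Rightarrow> 'a monoid" where
  "opp G = \<lparr>carrier = carrier G, mult = (\<lambda>x y. y \<otimes>\<^bsub>G\<^esub> x), one = \<one>\<^bsub>G\<^esub>\<rparr>"

context group
begin

lemma opp_group: "group (opp G)"
proof (rule groupI)
  show "\<one>\<^bsub>opp G\<^esub> \<in> carrier (opp G)" by (simp add: opp_def)
  fix x assume x: "x \<in> carrier (opp G)"
  show "\<one>\<^bsub>opp G\<^esub> \<otimes>\<^bsub>opp G\<^esub> x = x" using x by (simp add: opp_def)
  show "\<exists>y\<in>carrier (opp G). y \<otimes>\<^bsub>opp G\<^esub> x = \<one>\<^bsub>opp G\<^esub>"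
    using x by (intro bexI[of _ "inv x"]) (simp_all add: opp_def)
next
  fix x y assume "x \<in> carrier (opp G)" "y \<in> carrier (opp G)"
  then show "x \<otimes>\<^bsub>opp G\<^esub> y \<in> carrier (opp G)" by (simp add: opp_def)
next
  fix x y z assume "x \<in> carrier (opp G)" "y \<in> carrier (opp G)" "z \<in> carrier (opp G)"
  then show "x \<otimes>\<^bsub>opp G\<^esub> y \<otimes>\<^bsub>opp G\<^esub> z = x \<otimes>\<^bsub>opp G\<^esub> (y \<otimes>\<^bsub>opp G\<^esub> z)"
    by (simp add: opp_def m_assoc)
qed

lemma opp_inv: "x \<in> carrier G \<Longrightarrow> inv\<^bsub>opp G\<^esub> x = inv x"
  by (rule group.inv_equality[OF opp_group]) (simp_all add: opp_def)

lemma opp_subgroup: "subgroup H G \<Longrightarrow> subgroup H (opp G)"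
proof -
  assume sH: "subgroup H G"
  have Hc: "H \<subseteq> carrier G" using sH subgroup.subset by blast
  show "subgroup H (opp G)"
  proof
    show "H \<subseteq> carrier (opp G)" using Hc by (simp add: opp_def)
    show "\<one>\<^bsub>opp G\<^esub> \<in> H" using subgroup.one_closed[OF sH] by (simp add: opp_def)
    fix x y assume x: "x \<in> H" and y: "y \<in> H"
    show "x \<otimes>\<^bsub>opp G\<^esub> y \<in> H" using subgroup.m_closed[OF sH y x] by (simp add: opp_def)
  next
    fix x assume x: "x \<in> H"
    have "inv\<^bsub>opp G\<^esub> x = inv x" using x Hc opp_inv by auto
    then show "inv\<^bsub>opp G\<^esub> x \<in> H" using subgroup.m_inv_closed[OF sH x] by simp
  qed
qed

lemma opp_left: "right_topological_group G T \<Longrightarrow> left_topological_group (opp G) T"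
  unfolding right_topological_group_def left_topological_group_def
  using opp_group by (simp add: opp_def)

end

theorem corollary5p11:
  fixes G :: "('a, 'm) monoid_scheme" and T :: "'a topology" and H :: "'a set"
    and RG :: "'b topology" and rG :: "'a \<Rightarrow> 'b"
    and RH :: "'c topology" and rH :: "'a \<Rightarrow> 'c"
    and \<phi> :: "'c \<Rightarrow> 'b"
  assumes "left_topological_group G T \<or> right_topological_group G T"
    and "subgroup H G"
    and "closedin T H"
    and "T1_reflection T RG rG"
    and "T1_reflection (subtopology T H) RH rH"
    and "continuous_map RH RG \<phi>"
    and "\<forall>h \<in> H. \<phi> (rH h) = rG h"
  shows "homeomorphic_map RH (subtopology RG (rG ` H)) \<phi>"
  using assms(1)
proof
  assume l: "left_topological_group G T"
  then have "group G" unfolding left_topological_group_def by simp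
  then show ?thesis by (rule group.main_left[OF _ l assms(2-7)])
next
  assume r: "right_topological_group G T"
  then have g: "group G" unfolding right_topological_group_def by simp
  show ?thesis
    by (rule group.main_left[OF group.opp_group[OF g] group.opp_left[OF g r]
          group.opp_subgroup[OF g assms(2)] assms(3-7)])
qed

end
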